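(* Let $n\ge2$ be an integer and $\lambda>0$. Consider the system of ODEs in $(\omega,x,y)\in\mathbb{R}^3$ $$\frac{d\omega}{dt}=x\omega,\qquad \frac{dx}{dt}=X(\omega,x,y):=x^2-xy+n-1-\lambda\omega^2,\qquad \frac{dy}{dt}=xy-nx^2-\lambda\omega^2,$$ restricted to trajectories lying in the half-space $\{\omega>0\}$. Then the regions $$\{x\ge 1,\ X(\omega,x,y)\ge 0\},\quad \{x\le -1,\ X(\omega,x,y)\le 0\},\quad \{y\le 0\}$$ are preserved by the system for increasing $t$, and the regions $$\{x\ge 1,\ X(\omega,x,y)\le 0\},\quad \{x\le -1,\ X(\omega,x,y)\ge 0\},\quad \{y\ge 0\}$$ are preserved by the system for decreasing $t$.
   Context: A set $V\subset\mathbb{R}^3$ is preserved for increasing $t$ if for every solution $\gamma(t)=(\omega(t),x(t),y(t))$ of the system (with $\omega>0$), $\gamma(t_0)\in V$ implies $\gamma(t)\in V$ for all $t>t_0$ for which the solution is defined; preserved for decreasing $t$ is defined analogously with $t<t_0$. Note that along a solution, $X(\omega(t),x(t),y(t))=\frac{dx}{dt}(t)$. *)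

theory Defs
  imports "HOL-Analysis.Analysis"
begin

definition Xf :: "nat \<Rightarrow> real \<Rightarrow> real \<Rightarrow> real \<Rightarrow> real \<Rightarrow> real" where
  "Xf n lam w x y = x^2 - x * y + real n - 1 - lam * w^2"

definition is_solution ::
  "nat \<Rightarrow> real \<Rightarrow> real set \<Rightarrow> (real \<Rightarrow> real) \<Rightarrow> (real \<Rightarrow> real) \<Rightarrow> (real \<Rightarrow> real) \<Rightarrow> bool" where
  "is_solution n lam I w x y \<longleftrightarrow> open I \<and> is_interval I \<and>
     (\<forall>t\<in>I. w t > 0 \<and>
        (w has_real_derivative (x t * w t)) (at t) \<and>
        (x has_real_derivative (Xf n lam (w t) (x t) (y t))) (at t) \<and>
        (y has_real_derivative (x t * y t - real n * (x t)^2 - lam * (w t)^2)) (at t))"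

definition preserved_inc :: "nat \<Rightarrow> real \<Rightarrow> (real \<times> real \<times> real) set \<Rightarrow> bool" where
  "preserved_inc n lam V \<longleftrightarrow>
     (\<forall>I w x y t0 t. is_solution n lam I w x y \<and> t0 \<in> I \<and> t \<in> I \<and> t0 < t \<and>
        (w t0, x t0, y t0) \<in> V \<longrightarrow> (w t, x t, y t) \<in> V)"

definition preserved_dec :: "nat \<Rightarrow> real \<Rightarrow> (real \<times> real \<times> real) set \<Rightarrow> bool" where
  "preserved_dec n lam V \<longleftrightarrow>
     (\<forall>I w x y t0 t. is_solution n lam I w x y \<and> t0 \<in> I \<and> t \<in> I \<and> t < t0 \<and>
        (w t0, x t0, y t0) \<in> V \<longrightarrow> (w t, x t, y t) \<in> V)"

end

theory Submission
  imports Defs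
begin

lemma key_ineq:
  fixes u Y a b L :: real
  assumes "u < 0" "u \<le> Y" "a + \<bar>b\<bar> < L" "0 \<le> Y \<longrightarrow> 0 \<le> b"
  shows "0 < (a - L) * u + b * Y"
proof -
  have h1: "(L - a) * (- u) > \<bar>b\<bar> * (- u)"
    using assms by (intro mult_strict_right_mono) auto
  have h2: "b * Y \<ge> \<bar>b\<bar> * u"
  proof (cases "Y \<ge> 0")
    case True
    then have "b \<ge> 0" using assms by auto
    then show ?thesis using True assms by (simp add: mult_left_mono)
  next
    case False
    have "\<bar>b\<bar> * u \<le> \<bar>b\<bar> * Y"
      using assms by (intro mult_left_mono) auto
    also have "\<bar>b\<bar> * Y \<le> b * Y" using False
      by (cases "b \<ge> 0") (auto simp: mult_right_mono_neg zero_le_mult_iff)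
    finally show ?thesis .
  qed
  show ?thesis using h1 h2 by (simp add: algebra_simps)
qed

lemma deriv_cont:
  assumes "\<forall>s\<in>S. (f has_real_derivative f' s) (at s)"
  shows "continuous_on S f"
  using assms by (intro continuous_at_imp_continuous_on) (auto intro: DERIV_isCont)

lemma core:
  fixes u Y du dY ka kb kc kd :: "real \<Rightarrow> real"
  assumes "a \<le> b"
    and du: "\<forall>s\<in>{a..b}. (u has_real_derivative du s) (at s)"
    and dY: "\<forall>s\<in>{a..b}. (Y has_real_derivative dY s) (at s)"
    and c1: "continuous_on {a..b} ka" and c2: "continuous_on {a..b} kb"
    and c3: "continuous_on {a..b} kc" and c4: "continuous_on {a..b} kd"
    and i1: "\<forall>s\<in>{a..b}. du s \<ge> ka s * u s + kb s * Y s"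
    and i2: "\<forall>s\<in>{a..b}. dY s \<ge> kc s * Y s + kd s * u s"
    and p1: "\<forall>s\<in>{a..b}. Y s \<ge> 0 \<longrightarrow> kb s \<ge> 0"
    and p2: "\<forall>s\<in>{a..b}. u s \<ge> 0 \<longrightarrow> kd s \<ge> 0"
    and u0: "u a \<ge> 0" and Y0: "Y a \<ge> 0"
  shows "\<forall>s\<in>{a..b}. u s \<ge> 0 \<and> Y s \<ge> 0"
proof -
  define f where "f s = max (ka s + \<bar>kb s\<bar>) (kc s + \<bar>kd s\<bar>)" for s
  have "continuous_on {a..b} f" unfolding f_def
    using c1 c2 c3 c4 by (intro continuous_intros)
  then obtain s0 where "s0 \<in> {a..b}" and s0: "\<forall>s\<in>{a..b}. f s \<le> f s0"
    using continuous_attains_sup[of "{a..b}" f] \<open>a \<le> b\<close> by auto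
  define L where "L = f s0 + 1"
  have L1: "ka s + \<bar>kb s\<bar> < L" and L2: "kc s + \<bar>kd s\<bar> < L" if "s \<in> {a..b}" for s
    using s0 that unfolding L_def f_def by (smt (verit))+
  define U where "U s = u s * exp (- L * s)" for s
  define V where "V s = Y s * exp (- L * s)" for s
  define m where "m s = min (U s) (V s)" for s
  have cu: "continuous_on {a..b} u" using du by (rule deriv_cont)
  have cY: "continuous_on {a..b} Y" using dY by (rule deriv_cont)
  have "continuous_on {a..b} m" unfolding m_def U_def V_def
    using cu cY by (intro continuous_intros)
  then obtain r where r: "r \<in> {a..b}" and rmin: "\<forall>s\<in>{a..b}. m r \<le> m s"
    using continuous_attains_inf[of "{a..b}" m] \<open>a \<le> b\<close> by auto
  show ?thesis
  proof (rule ccontr)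
    assume "\<not> ?thesis"
    then obtain s where s: "s \<in> {a..b}" "u s < 0 \<or> Y s < 0" by auto
    have "U s < 0 \<or> V s < 0" using s unfolding U_def V_def
      by (auto simp: mult_less_0_iff)
    then have "m s < 0" unfolding m_def by auto
    then have mr: "m r < 0" using rmin s by force
    have ma: "m a \<ge> 0" using u0 Y0 unfolding m_def U_def V_def by simp
    have "r \<noteq> a" using mr ma by auto
    then have ra: "a < r" using r by auto
    have E: "exp (- L * r) > 0" by simp
    have contra: False if D: "(g has_real_derivative l) (at r)" and lpos: "0 < l"
      and gm: "\<forall>s. m s \<le> g s" and gr: "g r = m r" for g l
    proof -
      obtain d where d: "d > 0" "\<forall>h>0. h < d \<longrightarrow> g (r - h) < g r"
        using DERIV_pos_inc_left[OF D lpos] by auto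
      define h where "h = min (d/2) (r - a)"
      have "h > 0" "h < d" using d ra unfolding h_def by auto
      then have "g (r - h) < g r" using d by auto
      moreover have "r - h \<in> {a..b}" using r \<open>h > 0\<close> unfolding h_def by auto
      ultimately show False using rmin gm gr by (metis leD order_trans)
    qed
    show False
    proof (cases "U r \<le> V r")
      case True
      have ur: "u r < 0" using True mr unfolding m_def U_def
        by (simp add: mult_less_0_iff)
      have uY: "u r \<le> Y r" using True unfolding U_def V_def by simp
      have DU: "(U has_real_derivative (du r * exp (- L * r) + u r * (exp (- L * r) * (- L)))) (at r)"
        unfolding U_def using du r
        by (auto intro!: derivative_eq_intros)
      have "0 < (ka r - L) * u r + kb r * Y r"
        using key_ineq[OF ur uY L1[OF r]] p1 r by auto
      also have "\<dots> \<le> du r - L * u r" using i1 r by (auto simp: algebra_simps)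
      finally have "0 < exp (- L * r) * (du r - L * u r)" using E by simp
      then have "0 < du r * exp (- L * r) + u r * (exp (- L * r) * (- L))"
        by (simp add: algebra_simps)
      from contra[OF DU this] show False
        using True unfolding m_def by auto
    next
      case False
      have ur: "Y r < 0" using False mr unfolding m_def V_def
        by (simp add: mult_less_0_iff)
      have uY: "Y r \<le> u r" using False unfolding U_def V_def by simp
      have DV: "(V has_real_derivative (dY r * exp (- L * r) + Y r * (exp (- L * r) * (- L)))) (at r)"
        unfolding V_def using dY r
        by (auto intro!: derivative_eq_intros)
      have "0 < (kc r - L) * Y r + kd r * u r"
        using key_ineq[OF ur uY L2[OF r]] p2 r by auto
      also have "\<dots> \<le> dY r - L * Y r" using i2 r by (auto simp: algebra_simps)
      finally have "0 < exp (- L * r) * (dY r - L * Y r)" using E by simp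
      then have "0 < dY r * exp (- L * r) + Y r * (exp (- L * r) * (- L))"
        by (simp add: algebra_simps)
      from contra[OF DV this] show False
        using False unfolding m_def by auto
    qed
  qed
qed


lemma Xid: fixes W x y lam :: real shows "2 * x * Xf n lam W x y - (Xf n lam W x y * y
       + x * (x * y - real n * x^2 - lam * W^2)) - lam * (2 * W * (x * W))
     = (3 * x - y) * Xf n lam W x y + (real n - 1) * x * (x^2 - 1)"
  unfolding Xf_def by algebra

lemma Xpoly_deriv:
  assumes dw: "(w has_real_derivative (x s * w s)) (at s)"
    and dx: "(x has_real_derivative (X)) (at s)"
    and dy: "(y has_real_derivative (Y)) (at s)"
    and eqE: "E = 2 * x s * X - (X * y s + x s * Y) - lam * (2 * w s * (x s * w s))"
  shows "((\<lambda>s. Xf n lam (w s) (x s) (y s)) has_real_derivative E) (at s)"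
  unfolding Xf_def
  apply (rule derivative_eq_intros dw dx dy refl)+
  unfolding eqE by (simp add: power2_eq_square algebra_simps)

lemma Xderiv:
  assumes sol: "is_solution n lam I w x y" and sI: "s \<in> I"
  shows "((\<lambda>s. Xf n lam (w s) (x s) (y s)) has_real_derivative
     ((3 * x s - y s) * Xf n lam (w s) (x s) (y s) + (real n - 1) * x s * ((x s)^2 - 1))) (at s)"
proof -
  from sol sI have dw: "(w has_real_derivative (x s * w s)) (at s)"
    and dx: "(x has_real_derivative (Xf n lam (w s) (x s) (y s))) (at s)"
    and dy: "(y has_real_derivative (x s * y s - real n * (x s)^2 - lam * (w s)^2)) (at s)"
    unfolding is_solution_def by auto
  show ?thesis
    by (rule Xpoly_deriv[OF dw dx dy]) (rule Xid[symmetric])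
qed

lemma sol_facts:
  assumes sol: "is_solution n lam I w x y" and "t0 \<in> I" "t \<in> I" "t0 \<le> t"
  shows "{t0..t} \<subseteq> I"
    and "\<forall>s\<in>{t0..t}. (x has_real_derivative (Xf n lam (w s) (x s) (y s))) (at s)"
    and "\<forall>s\<in>{t0..t}. (y has_real_derivative (x s * y s - real n * (x s)^2 - lam * (w s)^2)) (at s)"
    and "\<forall>s\<in>{t0..t}. (w has_real_derivative (x s * w s)) (at s)"
    and "continuous_on {t0..t} x" "continuous_on {t0..t} y" "continuous_on {t0..t} w"
proof -
  have iv: "is_interval I" and H: "\<forall>t\<in>I. w t > 0 \<and>
        (w has_real_derivative (x t * w t)) (at t) \<and>
        (x has_real_derivative (Xf n lam (w t) (x t) (y t))) (at t) \<and>
        (y has_real_derivative (x t * y t - real n * (x t)^2 - lam * (w t)^2)) (at t)"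
    using sol unfolding is_solution_def by blast+
  show sub: "{t0..t} \<subseteq> I"
  proof
    fix s assume "s \<in> {t0..t}"
    then show "s \<in> I" using mem_is_interval_1_I[OF iv assms(2,3)] by simp
  qed
  show d1: "\<forall>s\<in>{t0..t}. (x has_real_derivative (Xf n lam (w s) (x s) (y s))) (at s)"
    and d2: "\<forall>s\<in>{t0..t}. (y has_real_derivative (x s * y s - real n * (x s)^2 - lam * (w s)^2)) (at s)"
    and d3: "\<forall>s\<in>{t0..t}. (w has_real_derivative (x s * w s)) (at s)"
    using H sub by blast+
  show "continuous_on {t0..t} x" using d1 by (rule deriv_cont)
  show "continuous_on {t0..t} y" using d2 by (rule deriv_cont)
  show "continuous_on {t0..t} w" using d3 by (rule deriv_cont)
qed

lemma set1:
  assumes sol: "is_solution n lam I w x y" and "t0 \<in> I" "t \<in> I" "t0 < t" "n \<ge> 1"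
    and "x t0 \<ge> 1" "Xf n lam (w t0) (x t0) (y t0) \<ge> 0"
  shows "x t \<ge> 1 \<and> Xf n lam (w t) (x t) (y t) \<ge> 0"
proof -
  note F = sol_facts[OF sol assms(2,3) less_imp_le[OF assms(4)]]
  define u where "u s = x s - 1" for s
  define Y where "Y s = Xf n lam (w s) (x s) (y s)" for s
  define dY where "dY s = (3 * x s - y s) * Y s + (real n - 1) * x s * ((x s)^2 - 1)" for s
  define kc where "kc s = 3 * x s - y s" for s
  define kd where "kd s = (real n - 1) * x s * (x s + 1)" for s
  have h1: "\<forall>s\<in>{t0..t}. (u has_real_derivative Y s) (at s)"
    using F(2) unfolding u_def Y_def by (auto intro!: derivative_eq_intros)
  have h2: "\<forall>s\<in>{t0..t}. (Y has_real_derivative dY s) (at s)"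
    using Xderiv[OF sol] F(1) unfolding Y_def dY_def by blast
  have h3: "continuous_on {t0..t} kc" unfolding kc_def using F by (intro continuous_intros)
  have h4: "continuous_on {t0..t} kd" unfolding kd_def using F by (intro continuous_intros)
  have h5: "\<forall>s\<in>{t0..t}. Y s \<ge> 0 * u s + 1 * Y s" by simp
  have h6: "\<forall>s\<in>{t0..t}. dY s \<ge> kc s * Y s + kd s * u s"
    unfolding dY_def kc_def kd_def u_def by (intro ballI order_eq_refl) algebra
  have h7: "\<forall>s\<in>{t0..t}. u s \<ge> 0 \<longrightarrow> kd s \<ge> 0"
    unfolding u_def kd_def using assms(5) by auto
  have "\<forall>s\<in>{t0..t}. u s \<ge> 0 \<and> Y s \<ge> 0"
    by (rule core[OF _ h1 h2 _ _ h3 h4 h5 h6 _ h7]) (use assms in \<open>auto simp: u_def Y_def\<close>)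
  then show ?thesis using assms(4) unfolding u_def Y_def by auto
qed

lemma set2:
  assumes sol: "is_solution n lam I w x y" and "t0 \<in> I" "t \<in> I" "t0 < t" "n \<ge> 1"
    and "x t0 \<le> -1" "Xf n lam (w t0) (x t0) (y t0) \<le> 0"
  shows "x t \<le> -1 \<and> Xf n lam (w t) (x t) (y t) \<le> 0"
proof -
  note F = sol_facts[OF sol assms(2,3) less_imp_le[OF assms(4)]]
  define u where "u s = -1 - x s" for s
  define Y where "Y s = - Xf n lam (w s) (x s) (y s)" for s
  define dY where "dY s = - ((3 * x s - y s) * Xf n lam (w s) (x s) (y s) + (real n - 1) * x s * ((x s)^2 - 1))" for s
  define kc where "kc s = 3 * x s - y s" for s
  define kd where "kd s = (real n - 1) * x s * (x s - 1)" for s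
  have h1: "\<forall>s\<in>{t0..t}. (u has_real_derivative Y s) (at s)"
    using F(2) unfolding u_def Y_def by (auto intro!: derivative_eq_intros)
  have h2: "\<forall>s\<in>{t0..t}. (Y has_real_derivative dY s) (at s)"
    using Xderiv[OF sol] F(1) unfolding Y_def dY_def by (auto intro!: derivative_eq_intros)
  have h3: "continuous_on {t0..t} kc" unfolding kc_def using F by (intro continuous_intros)
  have h4: "continuous_on {t0..t} kd" unfolding kd_def using F by (intro continuous_intros)
  have h5: "\<forall>s\<in>{t0..t}. Y s \<ge> 0 * u s + 1 * Y s" by simp
  have h6: "\<forall>s\<in>{t0..t}. dY s \<ge> kc s * Y s + kd s * u s"
    unfolding dY_def kc_def kd_def u_def Y_def by (intro ballI order_eq_refl) algebra
  have h7: "\<forall>s\<in>{t0..t}. u s \<ge> 0 \<longrightarrow> kd s \<ge> 0"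
  proof (intro ballI impI)
    fix s assume "u s \<ge> 0"
    then have "x s * (x s - 1) \<ge> 0" unfolding u_def by (simp add: zero_le_mult_iff)
    moreover have "real n - 1 \<ge> 0" using assms(5) by auto
    ultimately show "kd s \<ge> 0" unfolding kd_def
      by (metis mult.assoc zero_le_mult_iff)
  qed
  have "\<forall>s\<in>{t0..t}. u s \<ge> 0 \<and> Y s \<ge> 0"
    by (rule core[OF _ h1 h2 _ _ h3 h4 h5 h6 _ h7]) (use assms in \<open>auto simp: u_def Y_def\<close>)
  then show ?thesis using assms(4) unfolding u_def Y_def by auto
qed

lemma set3:
  assumes sol: "is_solution n lam I w x y" and "t0 \<in> I" "t \<in> I" "t0 < t" "lam > 0"
    and "y t0 \<le> 0"
  shows "y t \<le> 0"
proof -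
  note F = sol_facts[OF sol assms(2,3) less_imp_le[OF assms(4)]]
  define u where "u s = - y s" for s
  define du where "du s = - (x s * y s - real n * (x s)^2 - lam * (w s)^2)" for s
  have h1: "\<forall>s\<in>{t0..t}. (u has_real_derivative du s) (at s)"
    using F(3) unfolding u_def du_def by (auto intro!: derivative_eq_intros)
  have h3: "continuous_on {t0..t} x" using F by simp
  have h5: "\<forall>s\<in>{t0..t}. du s \<ge> x s * u s + 0 * u s"
  proof
    fix s
    have "real n * (x s)^2 \<ge> 0" "lam * (w s)^2 \<ge> 0" using assms(5) by auto
    then show "du s \<ge> x s * u s + 0 * u s" unfolding du_def u_def by simp
  qed
  have "\<forall>s\<in>{t0..t}. u s \<ge> 0 \<and> u s \<ge> 0"
    by (rule core[OF _ h1 h1 h3 _ h3 _ h5 h5]) (use assms in \<open>auto simp: u_def\<close>)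
  then show ?thesis using assms(4) unfolding u_def by auto
qed

lemma Xf_neg: "Xf n lam w (- x) (- y) = Xf n lam w x y"
  unfolding Xf_def by simp

lemma reverse_sol:
  assumes sol: "is_solution n lam I w x y"
  shows "is_solution n lam (uminus ` I) (\<lambda>t. w (- t)) (\<lambda>t. - x (- t)) (\<lambda>t. - y (- t))"
  unfolding is_solution_def
proof (intro conjI ballI)
  have oI: "open I" using sol unfolding is_solution_def by blast
  show "open (uminus ` I)" using open_negations[OF oI] .
  have iv: "is_interval I" using sol unfolding is_solution_def by blast
  show "is_interval (uminus ` I)"
    unfolding is_interval_1
  proof (intro ballI allI impI)
    fix a b c assume a: "a \<in> uminus ` I" and b: "b \<in> uminus ` I" and c: "a \<le> c \<and> c \<le> b"
    from a obtain a' where a': "a' \<in> I" "a = - a'" by blast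
    from b obtain b' where b': "b' \<in> I" "b = - b'" by blast
    have "- c \<in> I" using mem_is_interval_1_I[OF iv b'(1) a'(1), of "- c"] a' b' c by simp
    then have "- (- c) \<in> uminus ` I" by (rule imageI)
    then show "c \<in> uminus ` I" by simp
  qed
  fix t assume "t \<in> uminus ` I"
  then obtain t' where "t' \<in> I" "t = - t'" by blast
  then have tI: "- t \<in> I" by simp
  from sol tI have wp: "w (- t) > 0" and dw: "(w has_real_derivative (x (- t) * w (- t))) (at (- t))"
    and dx: "(x has_real_derivative (Xf n lam (w (- t)) (x (- t)) (y (- t)))) (at (- t))"
    and dy: "(y has_real_derivative (x (- t) * y (- t) - real n * (x (- t))^2 - lam * (w (- t))^2)) (at (- t))"
    unfolding is_solution_def by blast+
  show "w (- t) > 0" by (rule wp)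
  show "((\<lambda>t. w (- t)) has_real_derivative (- x (- t) * w (- t))) (at t)"
    using dw unfolding DERIV_mirror by simp
  have "((\<lambda>t. x (- t)) has_real_derivative - Xf n lam (w (- t)) (x (- t)) (y (- t))) (at t)"
    using dx unfolding DERIV_mirror .
  from DERIV_minus[OF this]
  show "((\<lambda>t. - x (- t)) has_real_derivative Xf n lam (w (- t)) (- x (- t)) (- y (- t))) (at t)"
    by (simp add: Xf_neg)
  have "((\<lambda>t. y (- t)) has_real_derivative - (x (- t) * y (- t) - real n * (x (- t))^2 - lam * (w (- t))^2)) (at t)"
    using dy unfolding DERIV_mirror .
  from DERIV_minus[OF this]
  show "((\<lambda>t. - y (- t)) has_real_derivative (- x (- t) * - y (- t) - real n * (- x (- t))^2 - lam * (w (- t))^2)) (at t)"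
    by simp
qed

theorem lemma3p2:
  fixes n :: nat and lam :: real
  assumes "n \<ge> 2" and "lam > 0"
  shows "preserved_inc n lam {(w, x, y). x \<ge> 1 \<and> Xf n lam w x y \<ge> 0} \<and>
    preserved_inc n lam {(w, x, y). x \<le> -1 \<and> Xf n lam w x y \<le> 0} \<and>
    preserved_inc n lam {(w, x, y). y \<le> 0} \<and>
    preserved_dec n lam {(w, x, y). x \<ge> 1 \<and> Xf n lam w x y \<le> 0} \<and>
    preserved_dec n lam {(w, x, y). x \<le> -1 \<and> Xf n lam w x y \<ge> 0} \<and>
    preserved_dec n lam {(w, x, y). y \<ge> 0}"
proof -
  have n1: "n \<ge> 1" using assms by auto
  have A: "preserved_inc n lam {(w, x, y). x \<ge> 1 \<and> Xf n lam w x y \<ge> 0}"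
    unfolding preserved_inc_def using set1 n1 by blast
  have B: "preserved_inc n lam {(w, x, y). x \<le> -1 \<and> Xf n lam w x y \<le> 0}"
    unfolding preserved_inc_def using set2 n1 by blast
  have C: "preserved_inc n lam {(w, x, y). y \<le> 0}"
    unfolding preserved_inc_def using set3 assms(2) by blast
  have D: "preserved_dec n lam {(w, x, y). x \<ge> 1 \<and> Xf n lam w x y \<le> 0}"
    unfolding preserved_dec_def
  proof (intro allI impI, elim conjE)
    fix I w x y t0 t
    assume sol: "is_solution n lam I w x y" and "t0 \<in> I" "t \<in> I" "t < t0"
      and h: "(w t0, x t0, y t0) \<in> {(w, x, y). x \<ge> 1 \<and> Xf n lam w x y \<le> 0}"
    have "- x t \<le> -1 \<and> Xf n lam (w t) (- x t) (- y t) \<le> 0"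
      using set2[OF reverse_sol[OF sol], of "- t0" "- t"] \<open>t0 \<in> I\<close> \<open>t \<in> I\<close> \<open>t < t0\<close> n1 h
      by (auto simp: Xf_neg)
    then show "(w t, x t, y t) \<in> {(w, x, y). x \<ge> 1 \<and> Xf n lam w x y \<le> 0}"
      by (simp add: Xf_neg)
  qed
  have E: "preserved_dec n lam {(w, x, y). x \<le> -1 \<and> Xf n lam w x y \<ge> 0}"
    unfolding preserved_dec_def
  proof (intro allI impI, elim conjE)
    fix I w x y t0 t
    assume sol: "is_solution n lam I w x y" and "t0 \<in> I" "t \<in> I" "t < t0"
      and h: "(w t0, x t0, y t0) \<in> {(w, x, y). x \<le> -1 \<and> Xf n lam w x y \<ge> 0}"
    have "- x t \<ge> 1 \<and> Xf n lam (w t) (- x t) (- y t) \<ge> 0"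
      using set1[OF reverse_sol[OF sol], of "- t0" "- t"] \<open>t0 \<in> I\<close> \<open>t \<in> I\<close> \<open>t < t0\<close> n1 h
      by (auto simp: Xf_neg)
    then show "(w t, x t, y t) \<in> {(w, x, y). x \<le> -1 \<and> Xf n lam w x y \<ge> 0}"
      by (simp add: Xf_neg)
  qed
  have G: "preserved_dec n lam {(w, x, y). y \<ge> 0}"
    unfolding preserved_dec_def
  proof (intro allI impI, elim conjE)
    fix I w x y t0 t
    assume sol: "is_solution n lam I w x y" and "t0 \<in> I" "t \<in> I" "t < t0"
      and h: "(w t0, x t0, y t0) \<in> {(w, x, y). y \<ge> 0}"
    have "- y t \<le> 0"
      using set3[OF reverse_sol[OF sol], of "- t0" "- t"] \<open>t0 \<in> I\<close> \<open>t \<in> I\<close> \<open>t < t0\<close> assms(2) h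
      by auto
    then show "(w t, x t, y t) \<in> {(w, x, y). y \<ge> 0}" by simp
  qed
  show ?thesis using A B C D E G by blast
qed

end
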